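(* (i) $\lim_{n\to\infty}\zeta^{\star}(2,\{1\}^n)=+\infty$. (ii) For integers $r\geq1$, $k_1\geq2$, $k_2,\ldots,k_r\geq1$, \[ \lim_{n\to\infty}\zeta^{\star}(k_1,\ldots,k_{r-1},k_r+1,\{1\}^n)=\zeta^{\star}(k_1,\ldots,k_{r-1},k_r),\qquad \lim_{n\to\infty}\zeta^{\star}(k_1,\ldots,k_{r-1},k_r,n)=\zeta^{\star}(k_1,\ldots,k_{r-1},k_r). \]
   Context: $\zeta^{\star}(k_1,\ldots,k_r)=\sum_{n_1\geq\cdots\geq n_r\geq 1}\frac{1}{n_1^{k_1}\cdots n_r^{k_r}}$ for $k_1\geq2$, $k_2,\ldots,k_r\geq1$; $\{1\}^n$ denotes $n$ consecutive arguments equal to $1$. *)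

theory Defs
  imports "HOL-Analysis.Analysis"
begin

definition zeta_star :: "nat list \<Rightarrow> real" where
  "zeta_star ks =
     (\<Sum>\<^sub>\<infinity> ns \<in> {ns. length ns = length ks \<and> sorted_wrt (\<ge>) ns \<and> (\<forall>n\<in>set ns. n \<ge> 1)}.
        \<Prod>i<length ks. 1 / real (ns ! i) ^ (ks ! i))"

end

theory Submission
  imports Defs
begin

fun F :: "nat list \<Rightarrow> nat \<Rightarrow> real" where
  "F [] m = 1"
| "F (k # ks) m = (\<Sum>j=1..m. 1 / real j ^ k * F ks j)"

lemma F_nonneg: "F ks m \<ge> 0"
  by (induction ks arbitrary: m) (auto intro!: sum_nonneg)

lemma F_append_le:
  assumes "c \<ge> 0" "\<And>j. j \<ge> 1 \<Longrightarrow> F t1 j \<le> c * F t2 j" "m \<ge> 1"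
  shows "F (ks @ t1) m \<le> c * F (ks @ t2) m"
  using assms(3)
proof (induction ks arbitrary: m)
  case Nil
  then show ?case using assms(2) by simp
next
  case (Cons k ks)
  have "F ((k # ks) @ t1) m = (\<Sum>j=1..m. 1 / real j ^ k * F (ks @ t1) j)" by simp
  also have "\<dots> \<le> (\<Sum>j=1..m. 1 / real j ^ k * (c * F (ks @ t2) j))"
    by (intro sum_mono mult_left_mono) (auto intro: Cons.IH)
  also have "\<dots> = c * F ((k # ks) @ t2) m"
    by (simp add: sum_distrib_left mult_ac)
  finally show ?case .
qed

lemma F_append_tendsto:
  assumes "\<And>j. j \<ge> 1 \<Longrightarrow> (\<lambda>n. F (t n) j) \<longlonglongrightarrow> F t' j" "m \<ge> 1"
  shows "(\<lambda>n. F (ks @ t n) m) \<longlonglongrightarrow> F (ks @ t') m"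
  using assms(2)
proof (induction ks arbitrary: m)
  case Nil
  then show ?case using assms(1) by simp
next
  case (Cons k ks)
  show ?case
    unfolding append_Cons F.simps
    by (intro tendsto_sum tendsto_mult_left) (auto intro: Cons.IH)
qed

lemma F_mono: "list_all2 (\<lambda>a b. a \<ge> b) ks ks' \<Longrightarrow> F ks m \<le> F ks' m"
proof (induction ks arbitrary: ks' m)
  case Nil
  then show ?case by simp
next
  case (Cons k ks)
  then obtain k' ks'' where ks': "ks' = k' # ks''" "k \<ge> k'" "list_all2 (\<lambda>a b. a \<ge> b) ks ks''"
    by (cases ks') auto
  have "F (k # ks) m \<le> (\<Sum>j=1..m. 1 / real j ^ k' * F ks'' j)"
    unfolding F.simps
  proof (intro sum_mono mult_mono)
    fix j assume "j \<in> {1..m}"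
    then have "real j \<ge> 1" by auto
    then show "1 / real j ^ k \<le> 1 / real j ^ k'"
      using ks'(2) by (intro divide_left_mono power_increasing) auto
  qed (auto intro: Cons.IH ks'(3) F_nonneg)
  then show ?case using ks' by simp
qed

definition S :: "nat \<Rightarrow> nat \<Rightarrow> real" where
  "S r m = F (replicate r 1) m"

lemma S_0[simp]: "S 0 m = 1"
  by (simp add: S_def)

lemma S_Suc: "S (Suc r) m = (\<Sum>j=1..m. S r j / real j)"
  by (simp add: S_def)

lemma S_nonneg: "S r m \<ge> 0"
  by (simp add: S_def F_nonneg)

lemma S_le: "m \<ge> 1 \<Longrightarrow> S r m \<le> real m"
proof (induction r arbitrary: m)
  case 0
  then show ?case by simp
next
  case (Suc r)
  have "S (Suc r) m \<le> (\<Sum>j=1..m. 1)"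
    unfolding S_Suc
  proof (intro sum_mono)
    fix j assume "j \<in> {1..m}"
    then show "S r j / real j \<le> 1" using Suc.IH[of j] by auto
  qed
  then show ?case by simp
qed

lemma S_mono: "m \<ge> 1 \<Longrightarrow> S r m \<le> S (Suc r) m"
proof (induction r arbitrary: m)
  case 0
  have "(\<Sum>j=1..m. 1 / real j) = 1 + (\<Sum>j=2..m. 1 / real j)"
    using 0 by (subst sum.atLeast_Suc_atMost) (auto simp: numeral_2_eq_2)
  moreover have "(\<Sum>j=2..m. 1 / real j) \<ge> 0" by (intro sum_nonneg) auto
  ultimately show ?case by (simp add: S_Suc)
next
  case (Suc r)
  have "S (Suc r) m = (\<Sum>j=1..m. S r j / real j)" by (rule S_Suc)
  also have "\<dots> \<le> (\<Sum>j=1..m. S (Suc r) j / real j)"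
    by (intro sum_mono divide_right_mono Suc.IH) auto
  also have "\<dots> = S (Suc (Suc r)) m" by (rule S_Suc[symmetric])
  finally show ?case .
qed

lemma S_one: "S r 1 = 1"
  by (induction r) (auto simp: S_Suc)

lemma S_step: "S (Suc r) (Suc m) = S (Suc r) m + S r (Suc m) / real (Suc m)"
  unfolding S_Suc by simp

lemma S_tendsto: "m \<ge> 1 \<Longrightarrow> (\<lambda>r. S r m) \<longlonglongrightarrow> real m"
proof (induction m rule: nat_induct_at_least)
  case base
  then show ?case by (simp add: S_one del: One_nat_def)
next
  case (Suc m)
  define x where "x = (\<lambda>r. S r (Suc m))"
  have inc: "incseq x" unfolding x_def by (intro incseq_SucI S_mono) auto
  have bdd: "bdd_above (range x)" unfolding x_def
    using S_le[of "Suc m"] by (intro bdd_aboveI[of _ "real (Suc m)"]) auto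
  define L where "L = (SUP r. x r)"
  have xL: "x \<longlonglongrightarrow> L" unfolding L_def by (rule LIMSEQ_incseq_SUP[OF bdd inc])
  have "(\<lambda>r. x (Suc r)) \<longlonglongrightarrow> L" using xL by (rule LIMSEQ_Suc)
  moreover have "(\<lambda>r. x (Suc r)) \<longlonglongrightarrow> real m + L / real (Suc m)"
    unfolding x_def S_step by (intro tendsto_add tendsto_divide LIMSEQ_Suc[OF Suc.IH] xL[unfolded x_def]) auto
  ultimately have "L = real m + L / real (Suc m)" by (rule LIMSEQ_unique)
  then have "L * real m = real m * real (Suc m)" by (simp add: field_simps)
  then have "L = real (Suc m)" using Suc.hyps by simp
  then show ?case using xL unfolding x_def by simp
qed

definition T :: "nat \<Rightarrow> nat \<Rightarrow> real" where
  "T r m = (\<Sum>i=1..m. S r i / real i ^ 2)"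
definition U :: "nat \<Rightarrow> nat \<Rightarrow> real" where
  "U r m = (\<Sum>i=1..m. S r i / (real i * (real i + 1)))"

lemma F_2_rep: "F (2 # replicate r 1) m = T r m"
  unfolding T_def by (simp add: S_def)

lemma aux_frac:
  fixes x a :: real assumes "x > 0"
  shows "a / (x * (x + 1)) + a / (x + 1) = a / x"
proof -
  have x1: "x + 1 > 0" using assms by auto
  have "a / (x + 1) = (a * x) / (x * (x + 1))" using assms x1 by simp
  then have "a / (x * (x + 1)) + a / (x + 1) = (a * (x + 1)) / (x * (x + 1))"
    by (simp add: add_divide_distrib[symmetric] algebra_simps)
  also have "\<dots> = a / x" using x1 by simp
  finally show ?thesis .
qed

lemma U_id: "U (Suc r) m + S (Suc r) m / (real m + 1) = T r m"
proof (induction m)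
  case 0
  have "S (Suc r) 0 = 0" unfolding S_Suc by simp
  then show ?case by (simp add: U_def T_def)
next
  case (Suc m)
  have "U (Suc r) (Suc m) + S (Suc r) (Suc m) / (real (Suc m) + 1)
      = U (Suc r) m + S (Suc r) (Suc m) / (real (Suc m) * (real (Suc m) + 1))
          + S (Suc r) (Suc m) / (real (Suc m) + 1)"
    by (simp add: U_def)
  also have "\<dots> = U (Suc r) m + S (Suc r) (Suc m) / real (Suc m)"
    using aux_frac[of "real (Suc m)" "S (Suc r) (Suc m)"] by (simp only: add.assoc)
  also have "\<dots> = U (Suc r) m + S (Suc r) m / (real m + 1) + S r (Suc m) / real (Suc m) ^ 2"
    unfolding S_step add_divide_distrib of_nat_Suc[symmetric] by (simp add: power2_eq_square)
  also have "\<dots> = T r (Suc m)"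
    using Suc by (simp add: T_def)
  finally show ?case .
qed

lemma U0: "U 0 m + 1 / (real m + 1) = 1"
proof (induction m)
  case 0
  then show ?case by (simp add: U_def)
next
  case (Suc m)
  have "U 0 (Suc m) = U 0 m + 1 / (real (Suc m) * (real (Suc m) + 1))"
    by (simp add: U_def)
  moreover have "1 / (real (Suc m) * (real (Suc m) + 1)) + 1 / (real (Suc m) + 1) = 1 / real (Suc m)"
    by (rule aux_frac) simp
  ultimately have "U 0 (Suc m) + 1 / (real (Suc m) + 1) = U 0 m + 1 / (real m + 1)"
    by (simp only: add.assoc) (simp add: add_ac)
  then show ?case using Suc by simp
qed

lemma T_le_U: "T r m \<le> 2 * U r m"
  unfolding T_def U_def sum_distrib_left
proof (intro sum_mono)
  fix i assume i: "i \<in> {1..m}"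
  have S0: "S r i \<ge> 0" by (rule S_nonneg)
  have "1 / real i ^ 2 \<le> 2 / (real i * (real i + 1))"
    using i by (simp add: divide_simps power2_eq_square)
  then have "S r i * (1 / real i ^ 2) \<le> S r i * (2 / (real i * (real i + 1)))"
    using S0 by (rule mult_left_mono)
  then show "S r i / real i ^ 2 \<le> 2 * (S r i / (real i * (real i + 1)))"
    by (simp add: mult.commute)
qed

lemma T_bound: "T r m \<le> 2 ^ Suc r"
proof (induction r)
  case 0
  have "U 0 m \<le> 1" using U0[of m] by (smt (verit) divide_nonneg_nonneg of_nat_0_le_iff)
  then show ?case using T_le_U[of 0 m] by simp
next
  case (Suc r)
  have "S (Suc r) m / (real m + 1) \<ge> 0" by (simp add: S_nonneg)
  then have "U (Suc r) m \<le> T r m" using U_id[of r m] by linarith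
  then show ?case using T_le_U[of "Suc r" m] Suc by simp
qed


definition AA :: "nat \<Rightarrow> nat list set" where
  "AA r = {ns. length ns = r \<and> sorted_wrt (\<ge>) ns \<and> (\<forall>n\<in>set ns. n \<ge> 1)}"
definition BB :: "nat \<Rightarrow> nat \<Rightarrow> nat list set" where
  "BB r m = {ns. length ns = r \<and> sorted_wrt (\<ge>) ns \<and> (\<forall>n\<in>set ns. n \<ge> 1 \<and> n \<le> m)}"
definition W :: "nat list \<Rightarrow> nat list \<Rightarrow> real" where
  "W ks = (\<lambda>ns. \<Prod>i<length ks. 1 / real (ns ! i) ^ (ks ! i))"

lemma zeta_star_alt: "zeta_star ks = infsum (W ks) (AA (length ks))"
  unfolding zeta_star_def AA_def W_def ..

lemma W_nonneg: "W ks ns \<ge> 0"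
  unfolding W_def by (intro prod_nonneg) auto

lemma W_Cons: "W (k # ks) (j # ns) = 1 / real j ^ k * W ks ns"
  unfolding W_def length_Cons prod.lessThan_Suc_shift by simp

lemma BB_finite: "finite (BB r m)"
proof -
  have "BB r m \<subseteq> {xs. set xs \<subseteq> {0..m} \<and> length xs = r}"
    unfolding BB_def by auto
  moreover have "finite {xs. set xs \<subseteq> {0..m} \<and> length xs = r}"
    by (rule finite_lists_length_eq) auto
  ultimately show ?thesis by (rule finite_subset)
qed

lemma BB_sub: "BB r m \<subseteq> AA r"
  unfolding BB_def AA_def by auto

lemma BB_mono: "m \<le> m' \<Longrightarrow> BB r m \<subseteq> BB r m'"
  unfolding BB_def by auto

lemma BB_Suc: "BB (Suc r) m = (\<lambda>(j, ns). j # ns) ` (SIGMA j:{1..m}. BB r j)"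
proof (intro equalityI subsetI)
  fix xs assume "xs \<in> BB (Suc r) m"
  then obtain j ns where xs: "xs = j # ns" and h: "length ns = r" "sorted_wrt (\<ge>) (j # ns)"
      "\<forall>n\<in>set (j # ns). n \<ge> 1 \<and> n \<le> m"
    unfolding BB_def by (cases xs) auto
  then have "(j, ns) \<in> (SIGMA j:{1..m}. BB r j)"
    unfolding BB_def by auto
  then show "xs \<in> (\<lambda>(j, ns). j # ns) ` (SIGMA j:{1..m}. BB r j)"
    using xs by (auto intro: rev_image_eqI)
next
  fix xs assume "xs \<in> (\<lambda>(j, ns). j # ns) ` (SIGMA j:{1..m}. BB r j)"
  then show "xs \<in> BB (Suc r) m"
    unfolding BB_def by force
qed

lemma F_BB: "F ks m = sum (W ks) (BB (length ks) m)"
proof (induction ks arbitrary: m)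
  case Nil
  have "BB 0 m = {[]}" unfolding BB_def by auto
  then show ?case by (simp add: W_def)
next
  case (Cons k ks)
  have inj: "inj_on (\<lambda>(j, ns). j # ns) (SIGMA j:{1..m}. BB (length ks) j)"
    by (auto simp: inj_on_def)
  have "sum (W (k # ks)) (BB (length (k # ks)) m)
      = (\<Sum>(j, ns)\<in>(SIGMA j:{1..m}. BB (length ks) j). W (k # ks) (j # ns))"
    unfolding length_Cons BB_Suc sum.reindex[OF inj]
    by (intro sum.cong) auto
  also have "\<dots> = (\<Sum>(j, ns)\<in>(SIGMA j:{1..m}. BB (length ks) j). 1 / real j ^ k * W ks ns)"
    by (simp add: W_Cons)
  also have "\<dots> = (\<Sum>j=1..m. \<Sum>ns\<in>BB (length ks) j. 1 / real j ^ k * W ks ns)"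
    by (rule sum.Sigma[symmetric]) (auto simp: BB_finite)
  also have "\<dots> = (\<Sum>j=1..m. 1 / real j ^ k * F ks j)"
    by (simp add: Cons.IH sum_distrib_left)
  finally show ?case by simp
qed

lemma zeta_lim:
  assumes bnd: "\<And>m. F ks m \<le> C"
  shows "F ks \<longlonglongrightarrow> zeta_star ks" and "F ks m \<le> zeta_star ks"
proof -
  define r where "r = length ks"
  define A where "A = AA r"
  have Fr: "F ks m = sum (W ks) (BB r m)" for m unfolding r_def by (rule F_BB)
  have cover: "\<exists>M. X \<subseteq> BB r M" if "finite X" "X \<subseteq> A" for X
  proof -
    define M where "M = Max (insert 0 (\<Union>(set ` X)))"
    have fin: "finite (insert 0 (\<Union>(set ` X)))" using that(1) by auto
    have "X \<subseteq> BB r M"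
    proof
      fix ns assume ns: "ns \<in> X"
      have "n \<le> M" if "n \<in> set ns" for n
        unfolding M_def using that ns by (intro Max_ge[OF fin]) auto
      then show "ns \<in> BB r M" using ns that(2) unfolding A_def AA_def BB_def by auto
    qed
    then show ?thesis by blast
  qed
  have le_F: "\<exists>M. sum (W ks) X \<le> F ks M" if hX: "finite X" "X \<subseteq> A" for X
  proof -
    obtain M where "X \<subseteq> BB r M" using cover[OF hX] by blast
    then have "sum (W ks) X \<le> sum (W ks) (BB r M)"
      by (intro sum_mono2 BB_finite) (auto simp: W_nonneg)
    then show ?thesis unfolding Fr by blast
  qed
  have bdd: "bdd_above (sum (W ks) ` {X. X \<subseteq> A \<and> finite X})"
  proof (rule bdd_aboveI)
    fix y assume "y \<in> sum (W ks) ` {X. X \<subseteq> A \<and> finite X}"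
    then obtain X where "y = sum (W ks) X" "finite X" "X \<subseteq> A" by auto
    then show "y \<le> C" using le_F bnd by (meson order_trans)
  qed
  have summ: "W ks summable_on A"
    by (rule nonneg_bdd_above_summable_on[OF _ bdd]) (simp add: W_nonneg)
  have Z: "zeta_star ks = (SUP X\<in>{X. finite X \<and> X \<subseteq> A}. sum (W ks) X)"
    unfolding zeta_star_alt r_def[symmetric] A_def[symmetric]
    by (rule infsum_nonneg_is_SUPREMUM_real[OF summ]) (simp add: W_nonneg)
  have bdd': "bdd_above (sum (W ks) ` {X. finite X \<and> X \<subseteq> A})"
    using bdd by (metis (no_types, lifting) Collect_cong conj_commute)
  have FZ: "F ks m \<le> zeta_star ks" for m
    unfolding Z Fr
    by (rule cSUP_upper[OF _ bdd']) (auto simp: BB_finite A_def BB_sub)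
  then show "F ks m \<le> zeta_star ks" .
  have inc: "incseq (F ks)"
    unfolding Fr by (intro incseq_SucI sum_mono2 BB_finite BB_mono) (auto simp: W_nonneg)
  have bddF: "bdd_above (range (F ks))"
    using bnd by (intro bdd_aboveI) auto
  have lim: "F ks \<longlonglongrightarrow> (SUP m. F ks m)" by (rule LIMSEQ_incseq_SUP[OF bddF inc])
  have "(SUP m. F ks m) \<le> zeta_star ks"
    by (rule cSUP_least) (auto simp: FZ)
  moreover have "zeta_star ks \<le> (SUP m. F ks m)"
    unfolding Z
  proof (rule cSUP_least)
    show "{X. finite X \<and> X \<subseteq> A} \<noteq> {}" by auto
    fix X assume "X \<in> {X. finite X \<and> X \<subseteq> A}"
    then obtain M where "sum (W ks) X \<le> F ks M" using le_F by auto
    also have "F ks M \<le> (SUP m. F ks m)" by (rule cSUP_upper[OF _ bddF]) auto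
    finally show "sum (W ks) X \<le> (SUP m. F ks m)" .
  qed
  ultimately have "zeta_star ks = (SUP m. F ks m)" by (rule antisym[rotated])
  then show "F ks \<longlonglongrightarrow> zeta_star ks" using lim by simp
qed

lemma F_bound:
  assumes "k \<ge> 2" "\<forall>x\<in>set ks. x \<ge> 1"
  shows "F (k # ks) m \<le> 2 ^ Suc (length ks)"
proof -
  have "list_all2 (\<lambda>a b. a \<ge> b) ks (replicate (length ks) 1)"
    using assms(2) by (induction ks) auto
  then have "list_all2 (\<lambda>a b. a \<ge> b) (k # ks) (2 # replicate (length ks) 1)"
    using assms(1) by auto
  then have "F (k # ks) m \<le> F (2 # replicate (length ks) 1) m" by (rule F_mono)
  also have "\<dots> = T (length ks) m" by (rule F_2_rep)
  also have "\<dots> \<le> 2 ^ Suc (length ks)" by (rule T_bound)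
  finally show ?thesis .
qed

lemma zeta_lim':
  assumes "ks \<noteq> []" "hd ks \<ge> 2" "\<forall>x\<in>set ks. x \<ge> 1"
  shows "F ks \<longlonglongrightarrow> zeta_star ks" and "F ks m \<le> zeta_star ks"
proof -
  obtain k ks' where ks: "ks = k # ks'" using assms(1) by (cases ks) auto
  have b: "F ks m \<le> 2 ^ Suc (length ks')" for m
    unfolding ks using assms ks by (intro F_bound) auto
  show "F ks \<longlonglongrightarrow> zeta_star ks" "F ks m \<le> zeta_star ks"
    using zeta_lim[OF b] by auto
qed

lemma nat_key: "n \<ge> 2 \<Longrightarrow> 2 ^ n * (j * Suc j) \<le> 4 * Suc j ^ n"
proof -
  assume "n \<ge> 2"
  then obtain k where n: "n = k + 2" by (metis add.commute le_Suc_ex)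
  have "2 ^ k \<le> Suc j ^ k \<or> j = 0" by (cases j) (auto intro: power_mono)
  moreover have "j * Suc j \<le> Suc j ^ 2" by (simp add: power2_eq_square)
  ultimately have le: "2 ^ k * (j * Suc j) \<le> Suc j ^ k * Suc j ^ 2" by (auto intro: mult_le_mono)
  have e1: "2 ^ n * (j * Suc j) = 4 * (2 ^ k * (j * Suc j))" by (simp add: n power_add)
  have e2: "4 * Suc j ^ n = 4 * (Suc j ^ k * Suc j ^ 2)" unfolding n power_add ..
  show ?thesis by (simp only: e1 e2) (rule mult_le_mono2[OF le])
qed

lemma key: assumes "n \<ge> 2" "j \<ge> 1"
  shows "1 / real (Suc j) ^ n \<le> 4 * (1/2) ^ n * (1 / real j - 1 / real (Suc j))"
proof -
  have "real (2 ^ n * (j * Suc j)) \<le> real (4 * Suc j ^ n)"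
    using nat_key[OF assms(1)] by (rule of_nat_mono)
  then have h: "2 ^ n * (real j * real (Suc j)) \<le> 4 * real (Suc j) ^ n"
    by (simp only: of_nat_mult of_nat_power of_nat_numeral)
  have "1 / real j - 1 / real (Suc j) = 1 / (real j * real (Suc j))"
    using assms(2) by (simp add: field_simps)
  then have "4 * (1/2) ^ n * (1 / real j - 1 / real (Suc j)) = 4 / (2 ^ n * (real j * real (Suc j)))"
    by (simp add: power_one_over)
  moreover have "1 / real (Suc j) ^ n \<le> 4 / (2 ^ n * (real j * real (Suc j)))"
    using h assms(2) by (simp add: divide_simps)
  ultimately show ?thesis by simp
qed

lemma G_bound: assumes "n \<ge> 2" "j \<ge> 1"
  shows "(\<Sum>i=1..j. 1 / real i ^ n) \<le> 1 + 4 * (1/2) ^ n * (1 - 1 / real j)"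
  using assms(2)
proof (induction j rule: nat_induct_at_least)
  case base
  then show ?case by simp
next
  case (Suc j)
  have "(\<Sum>i=1..Suc j. 1 / real i ^ n) = (\<Sum>i=1..j. 1 / real i ^ n) + 1 / real (Suc j) ^ n"
    by simp
  also have "\<dots> \<le> 1 + 4 * (1/2) ^ n * (1 - 1 / real j) + 4 * (1/2) ^ n * (1 / real j - 1 / real (Suc j))"
    using Suc.IH key[OF assms(1) Suc.hyps] by linarith
  also have "\<dots> = 1 + 4 * (1/2) ^ n * (1 - 1 / real (Suc j))"
    by (simp add: algebra_simps)
  finally show ?case .
qed

lemma G_ge: assumes "j \<ge> 1" shows "(\<Sum>i=1..j. 1 / real i ^ n) \<ge> 1"
proof -
  have "(\<Sum>i=1..j. 1 / real i ^ n) = 1 + (\<Sum>i=2..j. 1 / real i ^ n)"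
    using assms by (subst sum.atLeast_Suc_atMost) (auto simp: numeral_2_eq_2)
  moreover have "(\<Sum>i=2..j. 1 / real i ^ n) \<ge> 0" by (intro sum_nonneg) auto
  ultimately show ?thesis by simp
qed

lemma interchange:
  fixes f :: "nat \<Rightarrow> nat \<Rightarrow> real"
  assumes g: "g \<longlonglongrightarrow> Z" and fY: "\<And>n m. m \<ge> 1 \<Longrightarrow> f n m \<le> Y n"
    and YZ: "\<And>n. Y n \<le> Z" and fg: "\<And>m. m \<ge> 1 \<Longrightarrow> (\<lambda>n. f n m) \<longlonglongrightarrow> g m"
  shows "Y \<longlonglongrightarrow> Z"
proof (rule LIMSEQ_I)
  fix r :: real assume r: "r > 0"
  obtain M0 where M0: "\<And>m. m \<ge> M0 \<Longrightarrow> norm (g m - Z) < r / 2"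
    using LIMSEQ_D[OF g, of "r/2"] r by auto
  define M where "M = max M0 1"
  have M1: "M \<ge> 1" and gM: "norm (g M - Z) < r / 2" unfolding M_def using M0 by auto
  obtain N where N: "\<And>n. n \<ge> N \<Longrightarrow> norm (f n M - g M) < r / 2"
    using LIMSEQ_D[OF fg[OF M1], of "r/2"] r by auto
  have "norm (Y n - Z) < r" if "n \<ge> N" for n
  proof -
    have a: "f n M - g M > - (r/2)" using N[OF that] by (smt (verit) real_norm_def)
    have b: "g M - Z > - (r/2)" using gM by (smt (verit) real_norm_def)
    have "Y n - Z \<le> 0" "Y n - Z > - r" using a b fY[OF M1, of n] YZ[of n] by linarith+
    then show ?thesis by simp
  qed
  then show "\<exists>N. \<forall>n\<ge>N. norm (Y n - Z) < r" by blast
qed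

lemma part1: "filterlim (\<lambda>n. zeta_star (2 # replicate n 1)) at_top sequentially"
  unfolding filterlim_at_top
proof
  fix B :: real
  obtain N where N: "\<And>m. m \<ge> N \<Longrightarrow> harm m \<ge> B + 1"
    using harm_at_top unfolding filterlim_at_top eventually_sequentially by blast
  define m where "m = max N 1"
  have m1: "m \<ge> 1" and hm: "harm m \<ge> B + 1" unfolding m_def using N by auto
  have "(\<lambda>n. F (2 # replicate n 1) m) \<longlonglongrightarrow> (\<Sum>i=1..m. 1 / real i ^ 2 * real i)"
    unfolding F.simps
    by (intro tendsto_sum tendsto_mult_left S_tendsto[unfolded S_def]) auto
  also have "(\<Sum>i=1..m. 1 / real i ^ 2 * real i) = harm m"
    unfolding harm_def by (intro sum.cong) (auto simp: power2_eq_square field_simps)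
  finally have lim: "(\<lambda>n. F (2 # replicate n 1) m) \<longlonglongrightarrow> harm m" .
  have "eventually (\<lambda>n. F (2 # replicate n 1) m > B) sequentially"
    using order_tendstoD(1)[OF lim, of B] hm by auto
  then show "eventually (\<lambda>n. B \<le> zeta_star (2 # replicate n 1)) sequentially"
  proof (rule eventually_mono)
    fix n assume "F (2 # replicate n 1) m > B"
    moreover have "F (2 # replicate n 1) m \<le> zeta_star (2 # replicate n 1)"
      by (rule zeta_lim'(2)) auto
    ultimately show "B \<le> zeta_star (2 # replicate n 1)" by simp
  qed
qed



lemma pow_aux: "i \<ge> 1 \<Longrightarrow> 1 / real i ^ Suc a * real i = 1 / real i ^ a"
  by (simp add: power_Suc field_simps)

lemma part2a:
  assumes ne: "ks \<noteq> []" and hd: "hd ks \<ge> 2" and one: "\<forall>k\<in>set ks. k \<ge> 1"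
  shows "(\<lambda>n. zeta_star (butlast ks @ [last ks + 1] @ replicate n 1)) \<longlonglongrightarrow> zeta_star ks"
proof -
  define ks0 where "ks0 = butlast ks"
  define a where "a = last ks"
  have ks: "ks = ks0 @ [a]" using ne by (simp add: ks0_def a_def)
  have a1: "a \<ge> 1" using ne one by (simp add: a_def)
  define t where "t = (\<lambda>n. (a + 1) # replicate n (1::nat))"
  have eq: "butlast ks @ [last ks + 1] @ replicate n 1 = ks0 @ t n" for n
    by (simp add: t_def ks0_def a_def)
  have hyp: "ks0 @ t n \<noteq> []" "hd (ks0 @ t n) \<ge> 2" "\<forall>x\<in>set (ks0 @ t n). x \<ge> 1" for n
  proof -
    show "ks0 @ t n \<noteq> []" by (simp add: t_def)
    show "hd (ks0 @ t n) \<ge> 2"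
    proof (cases "ks0 = []")
      case True
      then show ?thesis using hd ks by (simp add: t_def)
    next
      case False
      then show ?thesis using hd ks by simp
    qed
    show "\<forall>x\<in>set (ks0 @ t n). x \<ge> 1" using one ks a1 by (auto simp: t_def)
  qed
  have Ft: "F (t n) j = (\<Sum>i=1..j. 1 / real i ^ Suc a * S n i)" for n j
    by (simp add: t_def S_def)
  have Fa: "F [a] j = (\<Sum>i=1..j. 1 / real i ^ a)" for j
    by simp
  have le: "F (t n) j \<le> 1 * F [a] j" if "j \<ge> 1" for n j
    unfolding Ft Fa mult_1
  proof (intro sum_mono)
    fix i assume i: "i \<in> {1..j}"
    have "1 / real i ^ Suc a * S n i \<le> 1 / real i ^ Suc a * real i"
      using i by (intro mult_left_mono S_le) auto
    also have "\<dots> = 1 / real i ^ a" using i by (intro pow_aux) auto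
    finally show "1 / real i ^ Suc a * S n i \<le> 1 / real i ^ a" .
  qed
  have tl: "(\<lambda>n. F (t n) j) \<longlonglongrightarrow> F [a] j" if "j \<ge> 1" for j
  proof -
    have "(\<lambda>n. F (t n) j) \<longlonglongrightarrow> (\<Sum>i=1..j. 1 / real i ^ Suc a * real i)"
      unfolding Ft by (intro tendsto_sum tendsto_mult_left S_tendsto) auto
    also have "(\<Sum>i=1..j. 1 / real i ^ Suc a * real i) = F [a] j"
      unfolding Fa by (intro sum.cong pow_aux) auto
    finally show ?thesis .
  qed
  have Zlim: "F ks \<longlonglongrightarrow> zeta_star ks" by (rule zeta_lim'(1)[OF ne hd one])
  show ?thesis
    unfolding eq
  proof (rule interchange[OF Zlim])
    fix n m :: nat assume "m \<ge> 1"
    show "F (ks0 @ t n) m \<le> zeta_star (ks0 @ t n)" by (rule zeta_lim'(2)[OF hyp])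
  next
    fix n
    show "zeta_star (ks0 @ t n) \<le> zeta_star ks"
    proof (rule LIMSEQ_le_const2[OF zeta_lim'(1)[OF hyp]])
      have "F (ks0 @ t n) m \<le> zeta_star ks" if "m \<ge> 1" for m
      proof -
        have "F (ks0 @ t n) m \<le> 1 * F (ks0 @ [a]) m"
          by (rule F_append_le[OF _ le that]) simp
        also have "\<dots> \<le> zeta_star ks" using zeta_lim'(2)[OF ne hd one, of m] ks by simp
        finally show ?thesis .
      qed
      then show "\<exists>N. \<forall>m\<ge>N. F (ks0 @ t n) m \<le> zeta_star ks" by blast
    qed
  next
    fix m :: nat assume "m \<ge> 1"
    then show "(\<lambda>n. F (ks0 @ t n) m) \<longlonglongrightarrow> F ks m"
      unfolding ks by (intro F_append_tendsto tl) auto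
  qed
qed

lemma part2b:
  assumes ne: "ks \<noteq> []" and hd: "hd ks \<ge> 2" and one: "\<forall>k\<in>set ks. k \<ge> 1"
  shows "(\<lambda>n. zeta_star (ks @ [n])) \<longlonglongrightarrow> zeta_star ks"
proof -
  define Z where "Z = zeta_star ks"
  define c where "c = (\<lambda>n::nat. 1 + 4 * (1/2::real) ^ n)"
  have Zlim: "F ks \<longlonglongrightarrow> Z" unfolding Z_def by (rule zeta_lim'(1)[OF ne hd one])
  have hyp: "ks @ [n] \<noteq> []" "hd (ks @ [n]) \<ge> 2" "\<forall>x\<in>set (ks @ [n]). x \<ge> 1" if "n \<ge> 1" for n
    using ne hd one that by auto
  have Fn: "F [n] j = (\<Sum>i=1..j. 1 / real i ^ n)" for n j by simp
  have lower: "Z \<le> zeta_star (ks @ [n])" if n: "n \<ge> 2" for n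
  proof (rule LIMSEQ_le[OF Zlim zeta_lim'(1)[OF hyp]])
    have "F ks m \<le> F (ks @ [n]) m" if "m \<ge> 1" for m
      using F_append_le[of 1 "[]" "[n]" m ks] that G_ge[of _ n] by (simp del: F.simps(2) add: Fn)
    then show "\<exists>N. \<forall>m\<ge>N. F ks m \<le> F (ks @ [n]) m" by blast
  qed (use n in auto)
  have upper: "zeta_star (ks @ [n]) \<le> c n * Z" if n: "n \<ge> 2" for n
  proof (rule LIMSEQ_le[OF zeta_lim'(1)[OF hyp] tendsto_mult_left[OF Zlim]])
    have Fle: "F [n] j \<le> c n * F [] j" if "j \<ge> 1" for j
    proof -
      have "F [n] j \<le> 1 + 4 * (1/2) ^ n * (1 - 1 / real j)"
        unfolding Fn using G_bound[OF n that] .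
      also have "\<dots> \<le> c n" unfolding c_def using that by (simp add: mult_left_le)
      finally show ?thesis by simp
    qed
    have "F (ks @ [n]) m \<le> c n * F ks m" if "m \<ge> 1" for m
      using F_append_le[of "c n" "[n]" "[]" m ks] that Fle by (simp add: c_def del: F.simps(2))
    then show "\<exists>N. \<forall>m\<ge>N. F (ks @ [n]) m \<le> c n * F ks m" by blast
  qed (use n in auto)
  have "(\<lambda>n::nat. (1/2::real) ^ n) \<longlonglongrightarrow> 0" by (rule LIMSEQ_power_zero) simp
  then have "(\<lambda>n. c n * Z) \<longlonglongrightarrow> (1 + 4 * 0) * Z"
    unfolding c_def by (intro tendsto_intros) auto
  then have clim: "(\<lambda>n. c n * Z) \<longlonglongrightarrow> Z" by simp
  show ?thesis
    unfolding Z_def[symmetric]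
  proof (rule tendsto_sandwich[OF _ _ tendsto_const clim])
    show "eventually (\<lambda>n. Z \<le> zeta_star (ks @ [n])) sequentially"
      using lower unfolding eventually_sequentially by blast
    show "eventually (\<lambda>n. zeta_star (ks @ [n]) \<le> c n * Z) sequentially"
      using upper unfolding eventually_sequentially by blast
  qed
qed

theorem lemma3p4:
  shows "filterlim (\<lambda>n. zeta_star (2 # replicate n 1)) at_top sequentially
    \<and> (\<forall>ks::nat list. ks \<noteq> [] \<and> hd ks \<ge> 2 \<and> (\<forall>k\<in>set ks. k \<ge> 1) \<longrightarrow>
         (\<lambda>n. zeta_star (butlast ks @ [last ks + 1] @ replicate n 1)) \<longlonglongrightarrow> zeta_star ks
       \<and> (\<lambda>n. zeta_star (ks @ [n])) \<longlonglongrightarrow> zeta_star ks)"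
  using part1 part2a part2b by blast

end
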